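(* Let $(\Omega,\mathcal F,\mathbb P)$ be a probability space, let $\mathfrak d,N\in\mathbb N$, let $\|\cdot\|$ be a norm on $\mathbb R^{\mathfrak d}$, let $\mathfrak H\subseteq\mathbb R^{\mathfrak d}$ be a set, let $\vartheta\in\mathfrak H$, $L,\varepsilon\in(0,\infty)$, let $\mathfrak E\colon\mathfrak H\times\Omega\to\mathbb R$ be $(\mathcal B(\mathfrak H)\otimes\mathcal F)/\mathcal B(\mathbb R)$-measurable with $|\mathfrak E(x,\omega)-\mathfrak E(y,\omega)|\le L\|x-y\|$ for all $x,y\in\mathfrak H$, $\omega\in\Omega$, and let $\Theta_n\colon\Omega\to\mathfrak H$, $n\in\{1,\dots,N\}$, be i.i.d. random variables. Then, writing $\mathfrak E(\Theta_n)$ for $\omega\mapsto\mathfrak E(\Theta_n(\omega),\omega)$ and $\mathfrak E(\vartheta)$ for $\omega\mapsto\mathfrak E(\vartheta,\omega)$, $$\mathbb P\Bigl(\bigl[\min_{n\in\{1,\dots,N\}}\mathfrak E(\Theta_n)\bigr]-\mathfrak E(\vartheta)>\varepsilon\Bigr)\le\Bigl[\mathbb P\bigl(\|\Theta_1-\vartheta\|>\tfrac{\varepsilon}L\bigr)\Bigr]^N\le\exp\Bigl(-N\,\mathbb P\bigl(\|\Theta_1-\vartheta\|\le\tfrac{\varepsilon}L\bigr)\Bigr).$$ *)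

theory Defs
  imports "HOL-Probability.Probability"
begin

definition is_norm_on :: "(real ^ 'd \<Rightarrow> real) \<Rightarrow> bool" where
  "is_norm_on nrm \<longleftrightarrow>
     (\<forall>x. nrm x = 0 \<longleftrightarrow> x = 0) \<and>
     (\<forall>x y. nrm (x + y) \<le> nrm x + nrm y) \<and>
     (\<forall>c x. nrm (c *\<^sub>R x) = \<bar>c\<bar> * nrm x)"

end

theory Submission
  imports Defs
begin

lemma norm_on_zero: assumes "is_norm_on nrm" shows "nrm 0 = 0"
  using assms unfolding is_norm_on_def by auto

lemma norm_on_sum: assumes "is_norm_on nrm" and "finite A"
  shows "nrm (\<Sum>i\<in>A. f i) \<le> (\<Sum>i\<in>A. nrm (f i))"
  using assms(2)
proof (induction A rule: finite_induct)
  case empty then show ?case using norm_on_zero[OF assms(1)] by simp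
next
  case (insert a A)
  have "nrm (\<Sum>i\<in>insert a A. f i) = nrm (f a + (\<Sum>i\<in>A. f i))" using insert by simp
  also have "\<dots> \<le> nrm (f a) + nrm (\<Sum>i\<in>A. f i)" using assms(1) unfolding is_norm_on_def by blast
  finally show ?case using insert by simp
qed

lemma norm_on_nonneg: assumes "is_norm_on nrm" shows "0 \<le> nrm x"
proof -
  have "nrm 0 \<le> nrm x + nrm (- x)"
    using assms unfolding is_norm_on_def by (metis add.right_inverse)
  moreover have "nrm (- x) = nrm x"
  proof -
    have h: "\<forall>c x. nrm (c *\<^sub>R x) = \<bar>c\<bar> * nrm x" using assms unfolding is_norm_on_def by blast
    show ?thesis using h[rule_format, of "-1" x] by simp
  qed
  ultimately show ?thesis using norm_on_zero[OF assms] by simp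
qed

lemma norm_on_bound: assumes "is_norm_on nrm"
  shows "nrm (x :: real ^ 'd) \<le> (\<Sum>i\<in>UNIV. nrm (axis i 1)) * norm x"
proof -
  have "x = (\<Sum>i\<in>UNIV. (x $ i) *\<^sub>R axis i 1)"
    by (simp add: vec_eq_iff sum_component axis_def if_distrib cong: if_cong)
  then have "nrm x = nrm (\<Sum>i\<in>UNIV. (x $ i) *\<^sub>R axis i (1::real))" by (rule arg_cong)
  also have "\<dots> \<le> (\<Sum>i\<in>UNIV. nrm ((x $ i) *\<^sub>R axis i (1::real)))"
    by (rule norm_on_sum[OF assms]) simp
  also have "\<dots> = (\<Sum>i\<in>UNIV. \<bar>x $ i\<bar> * nrm (axis i 1))"
    using assms unfolding is_norm_on_def by simp
  also have "\<dots> \<le> (\<Sum>i\<in>UNIV. norm x * nrm (axis i 1))"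
  proof (rule sum_mono)
    fix i
    have "0 \<le> nrm (axis i (1::real))" by (rule norm_on_nonneg[OF assms])
    then show "\<bar>x $ i\<bar> * nrm (axis i 1) \<le> norm x * nrm (axis i 1)"
      by (simp add: component_le_norm_cart mult_right_mono)
  qed
  also have "\<dots> = (\<Sum>i\<in>UNIV. nrm (axis i 1)) * norm x"
    by (simp add: sum_distrib_left mult.commute)
  finally show ?thesis .
qed

lemma norm_on_continuous: assumes "is_norm_on nrm"
  shows "continuous_on UNIV (nrm :: real ^ 'd \<Rightarrow> real)"
proof -
  define C where "C = (\<Sum>i\<in>UNIV. nrm (axis i (1::real) :: real ^ 'd))"
  have tri: "nrm x - nrm y \<le> nrm (x - y)" for x y :: "real ^ 'd"
    using assms unfolding is_norm_on_def by (metis diff_add_cancel diff_le_eq)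
  have "\<bar>nrm x - nrm y\<bar> \<le> C * dist x y" for x y :: "real ^ 'd"
  proof -
    have "nrm x - nrm y \<le> C * norm (x - y)" using tri[of x y] norm_on_bound[OF assms, of "x - y"]
      unfolding C_def by linarith
    moreover have "nrm y - nrm x \<le> C * norm (x - y)" using tri[of y x] norm_on_bound[OF assms, of "y - x"]
      unfolding C_def by (simp add: norm_minus_commute)
    ultimately show ?thesis by (simp add: dist_norm)
  qed
  moreover have "0 \<le> C" unfolding C_def
    by (intro sum_nonneg) (rule norm_on_nonneg[OF assms])
  ultimately have "C-lipschitz_on UNIV nrm"
    by (intro lipschitz_onI) (auto simp: dist_real_def)
  then show ?thesis using lipschitz_on_continuous_on by blast
qed

theorem lemma3p22:
  fixes M :: "'w measure"
    and nrm :: "real ^ 'd \<Rightarrow> real"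
    and H :: "(real ^ 'd) set"
    and \<theta>0 :: "real ^ 'd"
    and L \<epsilon> :: real
    and N :: nat
    and E :: "real ^ 'd \<Rightarrow> 'w \<Rightarrow> real"
    and \<Theta> :: "nat \<Rightarrow> 'w \<Rightarrow> real ^ 'd"
  assumes "prob_space M"
    and "N \<ge> 1"
    and "is_norm_on nrm"
    and "\<theta>0 \<in> H"
    and "L > 0" and "\<epsilon> > 0"
    and "(\<lambda>(x, \<omega>). E x \<omega>) \<in> borel_measurable (restrict_space borel H \<Otimes>\<^sub>M M)"
    and "\<And>x y \<omega>. x \<in> H \<Longrightarrow> y \<in> H \<Longrightarrow> \<omega> \<in> space M \<Longrightarrow>
           \<bar>E x \<omega> - E y \<omega>\<bar> \<le> L * nrm (x - y)"
    and "\<And>n. n \<in> {1..N} \<Longrightarrow> \<Theta> n \<in> measurable M (restrict_space borel H)"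
    and "prob_space.indep_vars M (\<lambda>_. restrict_space borel H) \<Theta> {1..N}"
    and "\<And>n. n \<in> {1..N} \<Longrightarrow>
           distr M (restrict_space borel H) (\<Theta> n) = distr M (restrict_space borel H) (\<Theta> 1)"
  shows "measure M {\<omega> \<in> space M. (MIN n\<in>{1..N}. E (\<Theta> n \<omega>) \<omega>) - E \<theta>0 \<omega> > \<epsilon>}
           \<le> (measure M {\<omega> \<in> space M. nrm (\<Theta> 1 \<omega> - \<theta>0) > \<epsilon> / L}) ^ N
       \<and> (measure M {\<omega> \<in> space M. nrm (\<Theta> 1 \<omega> - \<theta>0) > \<epsilon> / L}) ^ N
           \<le> exp (- real N * measure M {\<omega> \<in> space M. nrm (\<Theta> 1 \<omega> - \<theta>0) \<le> \<epsilon> / L})"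
proof -
  note A = assms
  interpret P: prob_space M by (rule A(1))
  define c where "c = \<epsilon> / L"
  define S where "S = {x \<in> H. c < nrm (x - \<theta>0)}"
  define B where "B n = {\<omega> \<in> space M. c < nrm (\<Theta> n \<omega> - \<theta>0)}" for n
  have spH: "space (restrict_space borel H) = H" by (simp add: space_restrict_space)
  have Hin: "\<Theta> n \<omega> \<in> H" if "n \<in> {1..N}" "\<omega> \<in> space M" for n \<omega>
    using measurable_space[OF A(9)[OF that(1)] that(2)] spH by simp
  have cont: "continuous_on UNIV (\<lambda>x. nrm (x - \<theta>0))"
    by (intro continuous_on_compose2[OF norm_on_continuous[OF A(3)]] continuous_intros) auto
  have "open {x. c < nrm (x - \<theta>0)}"
    by (rule open_Collect_less[OF _ cont]) (simp add: continuous_on_const)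
  then have "{x. c < nrm (x - \<theta>0)} \<in> sets borel" by simp
  then have Sm: "S \<in> sets (restrict_space borel H)"
    unfolding S_def sets_restrict_space by (auto intro!: image_eqI[where x="{x. c < nrm (x - \<theta>0)}"])
  have BS: "B n = \<Theta> n -` S \<inter> space M" if "n \<in> {1..N}" for n
    using Hin[OF that] unfolding B_def S_def by auto
  have 1: "1 \<in> {1..N}" using A(2) by simp
  have Bev: "B n \<in> P.events" if "n \<in> {1..N}" for n
    unfolding BS[OF that] using A(9)[OF that] Sm by (rule measurable_sets)
  have Beq: "P.prob (B n) = P.prob (B 1)" if "n \<in> {1..N}" for n
  proof -
    have "P.prob (B n) = measure (distr M (restrict_space borel H) (\<Theta> n)) S"
      unfolding BS[OF that] by (rule measure_distr[OF A(9)[OF that] Sm, symmetric])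
    also have "\<dots> = measure (distr M (restrict_space borel H) (\<Theta> 1)) S" using A(11)[OF that] by simp
    also have "\<dots> = P.prob (B 1)"
      unfolding BS[OF 1] by (rule measure_distr[OF A(9)[OF 1] Sm])
    finally show ?thesis .
  qed
  have ind: "P.prob (\<Inter>n\<in>{1..N}. B n) = (\<Prod>n\<in>{1..N}. P.prob (B n))"
  proof (rule P.indep_setsD)
    show "P.indep_sets (\<lambda>i. {\<Theta> i -` A \<inter> space M |A. A \<in> sets (restrict_space borel H)}) {1..N}"
      using A(10) unfolding P.indep_vars_def2 by blast
    show "\<forall>j\<in>{1..N}. B j \<in> {\<Theta> j -` A \<inter> space M |A. A \<in> sets (restrict_space borel H)}"
      using BS Sm by blast
  qed (use A(2) in auto)
  define Ev where "Ev = {\<omega> \<in> space M. (MIN n\<in>{1..N}. E (\<Theta> n \<omega>) \<omega>) - E \<theta>0 \<omega> > \<epsilon>}"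
  have sub: "Ev \<subseteq> (\<Inter>n\<in>{1..N}. B n)"
  proof
    fix \<omega> assume w: "\<omega> \<in> Ev"
    show "\<omega> \<in> (\<Inter>n\<in>{1..N}. B n)"
    proof
      fix n assume n: "n \<in> {1..N}"
      have wM: "\<omega> \<in> space M" using w unfolding Ev_def by simp
      have "(MIN n\<in>{1..N}. E (\<Theta> n \<omega>) \<omega>) \<le> E (\<Theta> n \<omega>) \<omega>" using n by (intro Min_le) auto
      then have "\<epsilon> < E (\<Theta> n \<omega>) \<omega> - E \<theta>0 \<omega>" using w unfolding Ev_def by simp
      also have "\<dots> \<le> L * nrm (\<Theta> n \<omega> - \<theta>0)" using A(8)[OF Hin[OF n wM] A(4) wM] by simp
      finally have "c < nrm (\<Theta> n \<omega> - \<theta>0)" unfolding c_def using A(5)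
        by (simp add: pos_divide_less_eq mult.commute)
      then show "\<omega> \<in> B n" unfolding B_def using wM by simp
    qed
  qed
  have interev: "(\<Inter>n\<in>{1..N}. B n) \<in> P.events"
    using Bev A(2) by (intro sets.finite_INT) auto
  have "P.prob Ev \<le> P.prob (\<Inter>n\<in>{1..N}. B n)"
  proof (cases "Ev \<in> P.events")
    case True then show ?thesis using sub interev by (intro P.finite_measure_mono) auto
  next
    case False then show ?thesis by (simp add: measure_notin_sets)
  qed
  also have "\<dots> = (\<Prod>n\<in>{1..N}. P.prob (B 1))" unfolding ind by (rule prod.cong[OF refl Beq])
  also have "\<dots> = P.prob (B 1) ^ N" by simp
  finally have first: "P.prob Ev \<le> P.prob (B 1) ^ N" .
  have compl: "{\<omega> \<in> space M. nrm (\<Theta> 1 \<omega> - \<theta>0) \<le> c} = space M - B 1"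
    unfolding B_def by auto
  define q where "q = P.prob (space M - B 1)"
  have pq: "P.prob (B 1) = 1 - q" unfolding q_def using P.prob_compl[OF Bev[OF 1]] by simp
  have q0: "0 \<le> 1 - q" unfolding pq[symmetric] by simp
  have "(1 - q) ^ N \<le> exp (- q) ^ N"
    using q0 exp_ge_add_one_self[of "-q"] by (intro power_mono) auto
  also have "\<dots> = exp (- real N * q)" by (simp add: exp_of_nat_mult[symmetric])
  finally have second: "P.prob (B 1) ^ N \<le> exp (- real N * q)" using pq by simp
  have e2: "B 1 = {\<omega> \<in> space M. nrm (\<Theta> 1 \<omega> - \<theta>0) > \<epsilon> / L}"
    unfolding B_def c_def by simp
  have e3: "space M - B 1 = {\<omega> \<in> space M. nrm (\<Theta> 1 \<omega> - \<theta>0) \<le> \<epsilon> / L}"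
    using compl unfolding c_def by simp
  have second': "P.prob (B 1) ^ N \<le> exp (- real N * P.prob (space M - B 1))"
    using second unfolding q_def .
  show ?thesis
    apply (rule conjI)
    subgoal using first unfolding Ev_def e2 .
    subgoal by (subst e3[symmetric], subst e2[symmetric], rule second')
    done
qed

end
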